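(* Let $G$ be a finite simple undirected connected graph, and let $c:V(G)\to \mathbb{R}_{>0}$ and $\kappa:V(G)\to \mathbb{Z}$ be functions such that $0\leq \kappa(u)\leq d_G(u)$ for every vertex $u$ of $G$. Then $$\beta(G,c,\kappa) = \sum_{u\in V(G)} \frac{c(u)\big(d_G(u)-\kappa(u)\big)\big(d_G(u)-\kappa(u)+1\big)}{2(d_G(u)+1)}$$ holds if and only if one of the following holds: (i) $\kappa(u)=d_G(u)$ for every vertex $u$ of $G$; (ii) $c$ is constant on $V(G)$ and $\kappa(u)=0$ for every vertex $u$ of $G$; (iii) $G$ is a clique (complete graph), $c$ and $\kappa$ are constant on $V(G)$, and $0<\kappa(u)<d_G(u)$ for every vertex $u$ of $G$.
   Context: $d_G(u)$ denotes the degree of $u$ in $G$, and $[n]=\{1,\dots,n\}$. For a function $\lambda:V(G)\to\mathbb{Z}$, a set $I\subseteq V(G)$ is called $\lambda$-degenerate in $G$ if there is a linear ordering $u_1,\ldots,u_k$ of the vertices of $I$ such that for every $i\in[k]$, $u_i$ has at most $\lambda(u_i)$ neighbors in $\{u_j: j\in[i-1]\}$. Define $$\beta(G,c,\kappa)=\min\Big\{\sum_{u\in V(G)} c(u)\iota(u) : \iota:V(G)\to\mathbb{Z}_{\geq 0} \text{ and } V(G) \text{ is } (\kappa+\iota)\text{-degenerate in } G\Big\}.$$ (It is known that always $\beta(G,c,\kappa)$ is at most the right-hand side sum in the claim.) *)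

theory Defs
  imports Complex_Main
begin

definition simple_graph :: "'a set \<Rightarrow> ('a \<Rightarrow> 'a \<Rightarrow> bool) \<Rightarrow> bool" where
  "simple_graph V E \<longleftrightarrow> finite V \<and> (\<forall>u v. E u v \<longrightarrow> u \<in> V \<and> v \<in> V)
     \<and> (\<forall>u v. E u v \<longrightarrow> E v u) \<and> (\<forall>u. \<not> E u u)"

definition graph_connected :: "'a set \<Rightarrow> ('a \<Rightarrow> 'a \<Rightarrow> bool) \<Rightarrow> bool" where
  "graph_connected V E \<longleftrightarrow> (\<forall>u\<in>V. \<forall>v\<in>V. E\<^sup>*\<^sup>* u v)"

definition degree :: "'a set \<Rightarrow> ('a \<Rightarrow> 'a \<Rightarrow> bool) \<Rightarrow> 'a \<Rightarrow> nat" where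
  "degree V E u = card {v \<in> V. E u v}"

definition degenerate :: "('a \<Rightarrow> 'a \<Rightarrow> bool) \<Rightarrow> ('a \<Rightarrow> int) \<Rightarrow> 'a set \<Rightarrow> bool" where
  "degenerate E lam I \<longleftrightarrow> (\<exists>xs. distinct xs \<and> set xs = I \<and>
     (\<forall>i < length xs. int (card {v \<in> set (take i xs). E (xs ! i) v}) \<le> lam (xs ! i)))"

definition beta :: "'a set \<Rightarrow> ('a \<Rightarrow> 'a \<Rightarrow> bool) \<Rightarrow> ('a \<Rightarrow> real) \<Rightarrow> ('a \<Rightarrow> int) \<Rightarrow> real" where
  "beta V E c \<kappa> = Inf {(\<Sum>u\<in>V. c u * of_int (\<iota> u)) | \<iota>.
      (\<forall>u\<in>V. 0 \<le> \<iota> u) \<and> degenerate E (\<lambda>u. \<kappa> u + \<iota> u) V}"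

end

theory Submission imports Defs "HOL-Combinatorics.Multiset_Permutations" "HOL-Combinatorics.Transposition" begin

fun lpos :: "'a list \<Rightarrow> 'a \<Rightarrow> nat" where
  "lpos [] x = 0"
| "lpos (y#ys) x = (if y = x then 0 else Suc (lpos ys x))"

lemma lpos_less: "x \<in> set xs \<Longrightarrow> lpos xs x < length xs"
  by (induction xs) auto

lemma nth_lpos: "x \<in> set xs \<Longrightarrow> xs ! lpos xs x = x"
  by (induction xs) auto

lemma lpos_nth: "distinct xs \<Longrightarrow> i < length xs \<Longrightarrow> lpos xs (xs ! i) = i"
proof (induction xs arbitrary: i)
  case Nil then show ?case by simp
next
  case (Cons a xs) then show ?case by (cases i) auto
qed

lemma lpos_map: "inj f \<Longrightarrow> lpos (map f xs) (f x) = lpos xs x"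
  by (induction xs) (auto simp: inj_eq)

lemma lpos_append: "lpos (xs @ ys) x = (if x \<in> set xs then lpos xs x else length xs + lpos ys x)"
  by (induction xs) auto

lemma lpos_inj: "inj_on (lpos xs) (set xs)"
  by (metis inj_onI nth_lpos)

lemma set_take_lpos: "distinct xs \<Longrightarrow> set (take i xs) = {v \<in> set xs. lpos xs v < i}"
proof (induction xs arbitrary: i)
  case Nil then show ?case by simp
next
  case (Cons a xs) then show ?case by (cases i) auto
qed

lemma card_lpos_less: "distinct xs \<Longrightarrow> i \<le> length xs \<Longrightarrow> card {v \<in> set xs. lpos xs v < i} = i"
  by (metis set_take_lpos distinct_card distinct_take length_take min.absorb2)


definition Bk :: "('a \<Rightarrow> 'a \<Rightarrow> bool) \<Rightarrow> 'a set \<Rightarrow> 'a list \<Rightarrow> 'a \<Rightarrow> nat" where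
  "Bk E V xs u = card {v \<in> V. E u v \<and> lpos xs v < lpos xs u}"

definition gk :: "int \<Rightarrow> nat \<Rightarrow> real" where
  "gk k b = max 0 (real b - of_int k)"

definition Fc :: "'a set \<Rightarrow> ('a \<Rightarrow> 'a \<Rightarrow> bool) \<Rightarrow> ('a \<Rightarrow> real) \<Rightarrow> ('a \<Rightarrow> int) \<Rightarrow> 'a list \<Rightarrow> real" where
  "Fc V E c \<kappa> xs = (\<Sum>u\<in>V. c u * gk (\<kappa> u) (Bk E V xs u))"

lemma card_take_Bk:
  assumes "distinct xs" "set xs = V" "i < length xs"
  shows "card {v \<in> set (take i xs). E (xs ! i) v} = Bk E V xs (xs ! i)"
proof -
  have "{v \<in> set (take i xs). E (xs ! i) v} = {v \<in> V. E (xs!i) v \<and> lpos xs v < lpos xs (xs ! i)}"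
    using assms by (auto simp: set_take_lpos lpos_nth)
  then show ?thesis by (simp add: Bk_def)
qed

lemma beta_eq:
  assumes fin: "finite V" and cpos: "\<forall>u\<in>V. c u > 0"
  shows "beta V E c \<kappa> = Min (Fc V E c \<kappa> ` permutations_of_set V)"
proof -
  let ?S = "{(\<Sum>u\<in>V. c u * of_int (\<iota> u)) | \<iota>.
      (\<forall>u\<in>V. 0 \<le> \<iota> u) \<and> degenerate E (\<lambda>u. \<kappa> u + \<iota> u) V}"
  let ?P = "permutations_of_set V"
  have Pne: "?P \<noteq> {}" "finite ?P" using fin by auto
  have inS: "Fc V E c \<kappa> xs \<in> ?S" if xs: "xs \<in> ?P" for xs
  proof -
    define \<iota> where "\<iota> u = max 0 (int (Bk E V xs u) - \<kappa> u)" for u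
    have d: "distinct xs" "set xs = V" using xs by (auto simp: permutations_of_set_def)
    have "degenerate E (\<lambda>u. \<kappa> u + \<iota> u) V"
      unfolding degenerate_def
    proof (intro exI[of _ xs] conjI allI impI)
      fix i assume "i < length xs"
      then show "int (card {v \<in> set (take i xs). E (xs ! i) v}) \<le> \<kappa> (xs ! i) + \<iota> (xs ! i)"
        using card_take_Bk[OF d] by (simp add: \<iota>_def)
    qed (use d in auto)
    moreover have "Fc V E c \<kappa> xs = (\<Sum>u\<in>V. c u * of_int (\<iota> u))"
      unfolding Fc_def \<iota>_def gk_def by (intro sum.cong refl) (simp add: of_int_max)
    moreover have "\<forall>u\<in>V. 0 \<le> \<iota> u" by (simp add: \<iota>_def)
    ultimately show ?thesis by blast
  qed
  have lower: "\<exists>xs\<in>?P. Fc V E c \<kappa> xs \<le> s" if "s \<in> ?S" for s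
  proof -
    obtain \<iota> where s: "s = (\<Sum>u\<in>V. c u * of_int (\<iota> u))" and nn: "\<forall>u\<in>V. 0 \<le> \<iota> u"
      and dg: "degenerate E (\<lambda>u. \<kappa> u + \<iota> u) V" using \<open>s \<in> ?S\<close> by blast
    obtain xs where d: "distinct xs" "set xs = V" and
      b: "\<forall>i < length xs. int (card {v \<in> set (take i xs). E (xs ! i) v}) \<le> \<kappa> (xs ! i) + \<iota> (xs ! i)"
      using dg unfolding degenerate_def by blast
    have "gk (\<kappa> u) (Bk E V xs u) \<le> of_int (\<iota> u)" if u: "u \<in> V" for u
    proof -
      have "lpos xs u < length xs" "xs ! lpos xs u = u" using u d by (auto simp: lpos_less nth_lpos)
      then have "int (Bk E V xs u) \<le> \<kappa> u + \<iota> u"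
        using b card_take_Bk[OF d, of "lpos xs u" E] by metis
      then show ?thesis using nn u unfolding gk_def by simp
    qed
    then have "Fc V E c \<kappa> xs \<le> s" unfolding Fc_def s
      by (intro sum_mono mult_left_mono) (use cpos in \<open>auto simp: less_imp_le\<close>)
    moreover have "xs \<in> ?P" using d by (auto simp: permutations_of_set_def)
    ultimately show ?thesis by blast
  qed
  show ?thesis unfolding beta_def
  proof (rule cInf_eq_minimum)
    show "Min (Fc V E c \<kappa> ` ?P) \<in> ?S"
    proof -
      have "Min (Fc V E c \<kappa> ` ?P) \<in> Fc V E c \<kappa> ` ?P" using Pne by (intro Min_in) auto
      then obtain xs where xs: "xs \<in> ?P" and eq: "Min (Fc V E c \<kappa> ` ?P) = Fc V E c \<kappa> xs" by auto
      show ?thesis unfolding eq by (rule inS[OF xs])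
    qed
  next
    fix y assume "y \<in> ?S"
    then obtain xs where "xs \<in> ?P" "Fc V E c \<kappa> xs \<le> y" using lower by blast
    then show "Min (Fc V E c \<kappa> ` ?P) \<le> y" using Pne by (meson Min_le finite_imageI image_eqI order_trans)
  qed
qed


lemma rank_bij:
  fixes f :: "'a \<Rightarrow> nat"
  assumes "finite M" "inj_on f M"
  shows "bij_betw (\<lambda>w. card {v\<in>M. f v < f w}) M {..<card M}"
proof -
  let ?r = "\<lambda>w. card {v\<in>M. f v < f w}"
  have inj: "inj_on ?r M"
  proof (rule inj_onI, rule ccontr)
    fix a b assume ab: "a \<in> M" "b \<in> M" "?r a = ?r b" "a \<noteq> b"
    have lt: "?r x < ?r y" if "x \<in> M" "y \<in> M" "f x < f y" for x y
    proof (rule psubset_card_mono)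
      show "finite {v\<in>M. f v < f y}" using assms by simp
      show "{v\<in>M. f v < f x} \<subset> {v\<in>M. f v < f y}" using that by auto
    qed
    have "f a \<noteq> f b" using ab assms(2) by (meson inj_on_eq_iff)
    then show False using lt[OF ab(1,2)] lt[OF ab(2,1)] ab(3) by linarith
  qed
  have sub: "?r ` M \<subseteq> {..<card M}"
  proof
    fix x assume "x \<in> ?r ` M"
    then obtain w where w: "w \<in> M" "x = ?r w" by auto
    have "{v\<in>M. f v < f w} \<subset> M" using w by auto
    then have "card {v\<in>M. f v < f w} < card M" by (rule psubset_card_mono[OF assms(1)])
    then show "x \<in> {..<card M}" using w(2) by simp
  qed
  have "card (?r ` M) = card {..<card M}" using inj by (simp add: card_image)
  then have "?r ` M = {..<card M}" using sub by (intro card_subset_eq) auto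
  then show ?thesis using inj by (simp add: bij_betw_def)
qed

lemma sum_rank:
  fixes f :: "'a \<Rightarrow> nat" and g :: "nat \<Rightarrow> real"
  assumes "finite M" "inj_on f M"
  shows "(\<Sum>w\<in>M. g (card {v\<in>M. f v < f w})) = (\<Sum>j<card M. g j)"
  using sum.reindex_bij_betw[OF rank_bij[OF assms], of g] by simp

lemma lpos_map_transpose:
  "lpos (map (transpose a b) xs) v = lpos xs (transpose a b v)"
proof -
  have "lpos (map (transpose a b) xs) (transpose a b (transpose a b v)) = lpos xs (transpose a b v)"
    by (rule lpos_map[OF inj_transpose])
  then show ?thesis by simp
qed

lemma avg:
  assumes G: "simple_graph V E" and u: "u \<in> V"
  shows "real (degree V E u + 1) * (\<Sum>xs\<in>permutations_of_set V. g (Bk E V xs u))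
        = fact (card V) * (\<Sum>j<degree V E u + 1. g j)"
proof -
  let ?P = "permutations_of_set V"
  define M where "M = insert u {v\<in>V. E u v}"
  define R where "R xs w = card {v\<in>M. lpos xs v < lpos xs w}" for xs w
  have fin: "finite V" using G by (simp add: simple_graph_def)
  have MV: "M \<subseteq> V" using u by (auto simp: M_def)
  have finM: "finite M" using MV fin finite_subset by blast
  have cardM: "card M = degree V E u + 1"
  proof -
    have "u \<notin> {v\<in>V. E u v}" using G by (simp add: simple_graph_def)
    then show ?thesis using fin by (simp add: M_def degree_def)
  qed
  have P: "distinct xs" "set xs = V" if "xs \<in> ?P" for xs
    using that by (auto simp: permutations_of_set_def)
  have BR: "Bk E V xs u = R xs u" for xs
  proof -
    have "{v \<in> V. E u v \<and> lpos xs v < lpos xs u} = {v\<in>M. lpos xs v < lpos xs u}"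
      using u by (auto simp: M_def)
    then show ?thesis by (simp add: Bk_def R_def)
  qed
  have swap: "(\<Sum>xs\<in>?P. g (R xs w)) = (\<Sum>xs\<in>?P. g (R xs u))" if w: "w \<in> M" for w
  proof -
    define \<pi> where "\<pi> = transpose u w"
    have perm: "\<pi> permutes V" unfolding \<pi>_def using u w MV by (intro permutes_swap_id) auto
    have img: "map \<pi> ` ?P = ?P" using perm by (rule permutations_of_set_image_permutes)
    have injm: "inj_on (map \<pi>) ?P"
      by (rule inj_on_subset[of _ UNIV]) (auto simp: \<pi>_def inj_transpose intro: inj_mapI)
    have uM: "u \<in> M" by (simp add: M_def)
    have piM: "\<pi> ` M = M" unfolding \<pi>_def using w uM by (intro transpose_image_eq) blast
    have key: "R (map \<pi> xs) u = R xs w" for xs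
    proof -
      have "{v\<in>M. lpos (map \<pi> xs) v < lpos (map \<pi> xs) u} = \<pi> ` {v\<in>M. lpos xs v < lpos xs w}"
      proof -
        have "{v\<in>M. lpos (map \<pi> xs) v < lpos (map \<pi> xs) u} = {v\<in>M. lpos xs (\<pi> v) < lpos xs w}"
          by (simp add: \<pi>_def lpos_map_transpose)
        also have "\<dots> = \<pi> ` {v\<in>M. lpos xs v < lpos xs w}"
        proof (rule set_eqI, rule iffI)
          fix x assume x: "x \<in> {v\<in>M. lpos xs (\<pi> v) < lpos xs w}"
          have "\<pi> x \<in> M" using x piM by blast
          moreover have "\<pi> (\<pi> x) = x" by (simp add: \<pi>_def)
          ultimately show "x \<in> \<pi> ` {v\<in>M. lpos xs v < lpos xs w}" using x by (metis (mono_tags, lifting) image_eqI mem_Collect_eq)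
        next
          fix x assume "x \<in> \<pi> ` {v\<in>M. lpos xs v < lpos xs w}"
          then obtain y where y: "y \<in> M" "lpos xs y < lpos xs w" "x = \<pi> y" by auto
          have "\<pi> y \<in> M" using y piM by blast
          moreover have "\<pi> (\<pi> y) = y" by (simp add: \<pi>_def)
          ultimately show "x \<in> {v\<in>M. lpos xs (\<pi> v) < lpos xs w}" using y by simp
        qed
        finally show ?thesis .
      qed
      then show ?thesis unfolding R_def
        by (simp add: card_image \<pi>_def inj_on_subset[OF inj_transpose])
    qed
    have "(\<Sum>xs\<in>?P. g (R xs u)) = (\<Sum>xs\<in>map \<pi> ` ?P. g (R xs u))" by (simp only: img)
    also have "\<dots> = (\<Sum>xs\<in>?P. g (R (map \<pi> xs) u))" by (simp only: sum.reindex[OF injm] comp_def)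
    also have "\<dots> = (\<Sum>xs\<in>?P. g (R xs w))" by (simp only: key)
    finally show ?thesis by (rule sym)
  qed
  have "(\<Sum>w\<in>M. \<Sum>xs\<in>?P. g (R xs w)) = (\<Sum>w\<in>M. \<Sum>xs\<in>?P. g (R xs u))"
    by (rule sum.cong[OF refl]) (rule swap)
  then have "real (card M) * (\<Sum>xs\<in>?P. g (R xs u)) = (\<Sum>w\<in>M. \<Sum>xs\<in>?P. g (R xs w))"
    by simp
  also have "\<dots> = (\<Sum>xs\<in>?P. \<Sum>w\<in>M. g (R xs w))" by (rule sum.swap)
  also have "\<dots> = (\<Sum>xs\<in>?P. \<Sum>j<card M. g j)"
  proof (rule sum.cong[OF refl])
    fix xs assume "xs \<in> ?P"
    then have "inj_on (lpos xs) M" using P MV lpos_inj inj_on_subset by metis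
    then show "(\<Sum>w\<in>M. g (R xs w)) = (\<Sum>j<card M. g j)" unfolding R_def by (rule sum_rank[OF finM])
  qed
  also have "\<dots> = fact (card V) * (\<Sum>j<card M. g j)" using fin by simp
  finally show ?thesis using cardM by (simp add: BR)
qed


lemma sum_gk_nat:
  "(\<Sum>j<Suc d. max 0 (real j - real m)) = (if m \<le> d then (real d - real m) * (real d - real m + 1) / 2 else 0)"
proof (induction d)
  case 0 then show ?case by simp
next
  case (Suc d)
  have e: "(\<Sum>j<Suc (Suc d). max 0 (real j - real m)) = (\<Sum>j<Suc d. max 0 (real j - real m)) + max 0 (real (Suc d) - real m)"
    by simp
  consider "m \<le> d" | "m = Suc d" | "m > Suc d" by linarith
  then show ?case
  proof cases
    case 1
    then have "max 0 (real (Suc d) - real m) = real (Suc d) - real m" by simp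
    then show ?thesis using Suc 1 e by (simp add: field_simps)
  next
    case 2
    then show ?thesis using Suc e by simp
  next
    case 3
    then show ?thesis using Suc e by simp
  qed
qed

lemma sum_gk:
  assumes "0 \<le> k" "k \<le> int d"
  shows "(\<Sum>j<d+1. gk k j) = of_int (int d - k) * of_int (int d - k + 1) / 2"
proof -
  obtain m where m: "k = int m" using assms(1) nonneg_eq_int by blast
  have "m \<le> d" using assms m by simp
  have "(\<Sum>j<d+1. gk k j) = (\<Sum>j<Suc d. max 0 (real j - real m))"
    by (simp add: gk_def m)
  also have "\<dots> = (if m \<le> d then (real d - real m) * (real d - real m + 1) / 2 else 0)"
    by (rule sum_gk_nat)
  also have "\<dots> = (real d - real m) * (real d - real m + 1) / 2"
    using \<open>m \<le> d\<close> by simp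
  finally show ?thesis by (simp add: m of_nat_diff)
qed

lemma total:
  assumes G: "simple_graph V E" and kap: "\<forall>u\<in>V. 0 \<le> \<kappa> u \<and> \<kappa> u \<le> int (degree V E u)"
  shows "(\<Sum>xs\<in>permutations_of_set V. Fc V E c \<kappa> xs) = fact (card V) *
      (\<Sum>u\<in>V. c u * of_int (int (degree V E u) - \<kappa> u) * of_int (int (degree V E u) - \<kappa> u + 1)
               / (2 * (real (degree V E u) + 1)))"
proof -
  let ?P = "permutations_of_set V"
  have "(\<Sum>xs\<in>?P. Fc V E c \<kappa> xs) = (\<Sum>u\<in>V. c u * (\<Sum>xs\<in>?P. gk (\<kappa> u) (Bk E V xs u)))"
    unfolding Fc_def by (simp add: sum.swap[of _ ?P] sum_distrib_left)
  also have "\<dots> = (\<Sum>u\<in>V. fact (card V) * (c u * of_int (int (degree V E u) - \<kappa> u) * of_int (int (degree V E u) - \<kappa> u + 1)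
               / (2 * (real (degree V E u) + 1))))"
  proof (rule sum.cong[OF refl])
    fix u assume u: "u \<in> V"
    let ?d = "degree V E u"
    have "real (?d + 1) * (\<Sum>xs\<in>?P. gk (\<kappa> u) (Bk E V xs u)) = fact (card V) * (\<Sum>j<?d + 1. gk (\<kappa> u) j)"
      by (rule avg[OF G u])
    also have "\<dots> = fact (card V) * (of_int (int ?d - \<kappa> u) * of_int (int ?d - \<kappa> u + 1) / 2)"
      using kap u by (subst sum_gk) auto
    finally have eq: "real (?d + 1) * (\<Sum>xs\<in>?P. gk (\<kappa> u) (Bk E V xs u)) = fact (card V) * (of_int (int ?d - \<kappa> u) * of_int (int ?d - \<kappa> u + 1) / 2)" .
    have "(\<Sum>xs\<in>?P. gk (\<kappa> u) (Bk E V xs u)) = (real (?d + 1) * (\<Sum>xs\<in>?P. gk (\<kappa> u) (Bk E V xs u))) / real (?d + 1)"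
      by (simp del: of_nat_Suc)
    also have "\<dots> = fact (card V) * (of_int (int ?d - \<kappa> u) * of_int (int ?d - \<kappa> u + 1) / 2) / (real ?d + 1)"
      unfolding eq by simp
    finally show "c u * (\<Sum>xs\<in>?P. gk (\<kappa> u) (Bk E V xs u)) = fact (card V) * (c u * of_int (int ?d - \<kappa> u) * of_int (int ?d - \<kappa> u + 1)
               / (2 * (real ?d + 1)))"
      by (simp add: algebra_simps)
  qed
  also have "\<dots> = fact (card V) *
      (\<Sum>u\<in>V. c u * of_int (int (degree V E u) - \<kappa> u) * of_int (int (degree V E u) - \<kappa> u + 1)
               / (2 * (real (degree V E u) + 1)))" by (simp add: sum_distrib_left)
  finally show ?thesis .
qed

lemma beta_iff_const:
  assumes G: "simple_graph V E" and cpos: "\<forall>u\<in>V. c u > 0"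
    and kap: "\<forall>u\<in>V. 0 \<le> \<kappa> u \<and> \<kappa> u \<le> int (degree V E u)"
  shows "beta V E c \<kappa> =
      (\<Sum>u\<in>V. c u * of_int (int (degree V E u) - \<kappa> u) * of_int (int (degree V E u) - \<kappa> u + 1)
               / (2 * (real (degree V E u) + 1)))
    \<longleftrightarrow> (\<forall>xs\<in>permutations_of_set V. \<forall>ys\<in>permutations_of_set V. Fc V E c \<kappa> xs = Fc V E c \<kappa> ys)"
    (is "_ = ?R \<longleftrightarrow> ?C")
proof -
  let ?P = "permutations_of_set V"
  let ?F = "Fc V E c \<kappa>"
  have fin: "finite V" using G by (simp add: simple_graph_def)
  have Pne: "?P \<noteq> {}" "finite ?P" using fin by auto
  have cardP: "card ?P = fact (card V)" using fin by simp
  have tot: "sum ?F ?P = real (card ?P) * ?R" using total[OF G kap, of c] cardP by simp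
  have b: "beta V E c \<kappa> = Min (?F ` ?P)" by (rule beta_eq[OF fin cpos])
  have allR: "(\<forall>xs\<in>?P. ?F xs = ?R) \<longleftrightarrow> ?C"
  proof
    assume "\<forall>xs\<in>?P. ?F xs = ?R" then show ?C by simp
  next
    assume C: ?C
    obtain x0 where x0: "x0 \<in> ?P" using Pne by blast
    have "sum ?F ?P = sum (\<lambda>_. ?F x0) ?P" by (rule sum.cong[OF refl]) (use C x0 in blast)
    then have "real (card ?P) * ?F x0 = real (card ?P) * ?R" using tot by simp
    moreover have "card ?P > 0" using Pne by (simp add: card_gt_0_iff)
    ultimately have "?F x0 = ?R" using fin by simp
    then show "\<forall>xs\<in>?P. ?F xs = ?R" using C x0 by metis
  qed
  have "Min (?F ` ?P) = ?R \<longleftrightarrow> (\<forall>xs\<in>?P. ?F xs = ?R)"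
  proof
    assume m: "Min (?F ` ?P) = ?R"
    have ge: "\<forall>xs\<in>?P. ?R \<le> ?F xs"
    proof
      fix xs assume "xs \<in> ?P"
      then have "Min (?F ` ?P) \<le> ?F xs" using Pne by (intro Min_le) auto
      then show "?R \<le> ?F xs" using m by simp
    qed
    have "sum (\<lambda>xs. ?F xs - ?R) ?P = 0" using tot by (simp add: sum_subtractf)
    moreover have "\<forall>xs\<in>?P. 0 \<le> ?F xs - ?R" using ge by simp
    ultimately have "\<forall>xs\<in>?P. ?F xs - ?R = 0" using sum_nonneg_eq_0_iff[OF Pne(2), of "\<lambda>xs. ?F xs - ?R"] by blast
    then show "\<forall>xs\<in>?P. ?F xs = ?R" by simp
  next
    assume a: "\<forall>xs\<in>?P. ?F xs = ?R"
    have "?F ` ?P = {?R}"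
    proof
      show "?F ` ?P \<subseteq> {?R}" using a by blast
      obtain x0 where "x0 \<in> ?P" using Pne by blast
      then show "{?R} \<subseteq> ?F ` ?P" using a by force
    qed
    then show "Min (?F ` ?P) = ?R" by simp
  qed
  then show ?thesis using b allR by simp
qed


lemma gk_step: "gk k (Suc n) = gk k n + (if k \<le> int n then 1 else 0)"
  unfolding gk_def by auto

lemma sum_two:
  assumes "finite V" "u \<in> V" "v \<in> V" "u \<noteq> v"
  shows "sum f V = f u + f v + (sum f (V - {u, v}) :: 'b :: comm_monoid_add)"
proof -
  have V: "V = insert u (insert v (V - {u, v}))" using assms by auto
  have "sum f V = sum f (insert u (insert v (V - {u, v})))" using V by simp
  also have "\<dots> = f u + (f v + sum f (V - {u, v}))" using assms by simp
  finally show ?thesis by (simp add: add.assoc)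
qed

lemma swapkey:
  assumes G: "simple_graph V E" and u: "u \<in> V" and v: "v \<in> V" and e: "E u v"
    and S: "S \<subseteq> V - {u, v}" and cpos: "\<forall>u\<in>V. c u > 0"
    and const: "\<forall>xs\<in>permutations_of_set V. \<forall>ys\<in>permutations_of_set V. Fc V E c \<kappa> xs = Fc V E c \<kappa> ys"
  shows "(\<kappa> u \<le> int (card {w\<in>S. E u w}) \<longleftrightarrow> \<kappa> v \<le> int (card {w\<in>S. E v w}))
        \<and> (\<kappa> u \<le> int (card {w\<in>S. E u w}) \<longrightarrow> c u = c v)"
proof -
  have fin: "finite V" using G by (simp add: simple_graph_def)
  have uv: "u \<noteq> v" using G e by (auto simp: simple_graph_def)
  have finS: "finite S" using S fin finite_subset by blast
  obtain s where s: "distinct s" "set s = S" using finite_distinct_list[OF finS] by blast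
  obtain r where r: "distinct r" "set r = V - S - {u, v}" using finite_distinct_list[of "V - S - {u, v}"] fin by blast
  define xs where "xs = s @ u # v # r"
  define ys where "ys = s @ v # u # r"
  have uS: "u \<notin> S" "v \<notin> S" using S by auto
  have xsP: "xs \<in> permutations_of_set V" using s r S u v uv unfolding xs_def permutations_of_set_def by auto
  have ysP: "ys \<in> permutations_of_set V" using s r S u v uv unfolding ys_def permutations_of_set_def by auto
  have px: "lpos xs x = (if x \<in> S then lpos s x else if x = u then length s else if x = v then Suc (length s)
      else Suc (Suc (length s + lpos r x)))" for x
    using uv s unfolding xs_def by (auto simp: lpos_append)
  have py: "lpos ys x = (if x \<in> S then lpos s x else if x = v then length s else if x = u then Suc (length s)
      else Suc (Suc (length s + lpos r x)))" for x
    using uv s unfolding ys_def by (auto simp: lpos_append)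
  have sless: "x \<in> S \<Longrightarrow> lpos s x < length s" for x using s lpos_less by metis
  have sless2: "x \<in> S \<Longrightarrow> lpos s x < Suc (length s)" for x using sless less_SucI by blast
  let ?a = "card {w\<in>S. E u w}" and ?b = "card {w\<in>S. E v w}"
  have finSv: "finite {w\<in>S. E v w}" using finS by simp
  have xu: "Bk E V xs u = ?a"
  proof -
    have "{w \<in> V. E u w \<and> lpos xs w < lpos xs u} = {w\<in>S. E u w}"
      using S sless uS by (auto simp: px)
    then show ?thesis by (simp add: Bk_def)
  qed
  have yv: "Bk E V ys v = ?b"
  proof -
    have "{w \<in> V. E v w \<and> lpos ys w < lpos ys v} = {w\<in>S. E v w}"
      using S sless uS by (auto simp: py)
    then show ?thesis by (simp add: Bk_def)
  qed
  have xv: "Bk E V xs v = Suc ?b"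
  proof -
    have "{w \<in> V. E v w \<and> lpos xs w < lpos xs v} = insert u {w\<in>S. E v w}"
      using S sless sless2 uS u e G by (auto simp: px simple_graph_def)
    then show ?thesis using uS finSv by (simp add: Bk_def)
  qed
  have finSu: "finite {w\<in>S. E u w}" using finS by simp
  have yu: "Bk E V ys u = Suc ?a"
  proof -
    have "{w \<in> V. E u w \<and> lpos ys w < lpos ys u} = insert v {w\<in>S. E u w}"
      using S sless sless2 uS v e uv by (auto simp: py)
    then show ?thesis using uS finSu by (simp add: Bk_def)
  qed
  have other: "Bk E V xs w = Bk E V ys w" if w: "w \<in> V - {u, v}" for w
  proof -
    have cmp: "(lpos xs x < lpos xs w) = (lpos ys x < lpos ys w)" for x
    proof (cases "w \<in> S")
      case True
      then have lw: "lpos s w < length s" by (rule sless)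
      show ?thesis
      proof (cases "x \<in> S")
        case True then show ?thesis using lw \<open>w \<in> S\<close> by (simp add: px py)
      next
        case False then show ?thesis using lw \<open>w \<in> S\<close> uv by (simp add: px py)
      qed
    next
      case False
      show ?thesis
      proof (cases "x \<in> S")
        case True
        then have "lpos s x < length s" by (rule sless)
        then show ?thesis using False w True by (simp add: px py)
      next
        case xS: False
        then show ?thesis using False w uv by (simp add: px py)
      qed
    qed
    have "{x \<in> V. E w x \<and> lpos xs x < lpos xs w} = {x \<in> V. E w x \<and> lpos ys x < lpos ys w}"
      using cmp by simp
    then show ?thesis by (simp add: Bk_def)
  qed
  have "Fc V E c \<kappa> xs = Fc V E c \<kappa> ys" using const xsP ysP by blast
  then have eq: "c u * gk (\<kappa> u) ?a + c v * gk (\<kappa> v) (Suc ?b) = c u * gk (\<kappa> u) (Suc ?a) + c v * gk (\<kappa> v) ?b"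
  proof -
    let ?f = "\<lambda>xs w. c w * gk (\<kappa> w) (Bk E V xs w)"
    have r: "sum (\<lambda>w. ?f xs w) (V - {u, v}) = sum (\<lambda>w. ?f ys w) (V - {u, v})"
      by (rule sum.cong[OF refl]) (simp add: other)
    have "Fc V E c \<kappa> xs = ?f xs u + ?f xs v + sum (\<lambda>w. ?f xs w) (V - {u, v})"
      unfolding Fc_def by (rule sum_two[OF fin u v uv])
    moreover have "Fc V E c \<kappa> ys = ?f ys u + ?f ys v + sum (\<lambda>w. ?f ys w) (V - {u, v})"
      unfolding Fc_def by (rule sum_two[OF fin u v uv])
    ultimately have "?f xs u + ?f xs v = ?f ys u + ?f ys v" using r \<open>Fc V E c \<kappa> xs = Fc V E c \<kappa> ys\<close> by simp
    then show ?thesis using xu xv yu yv by simp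
  qed
  then have "c v * (if \<kappa> v \<le> int ?b then 1 else 0) = c u * (if \<kappa> u \<le> int ?a then 1 else 0)"
    unfolding gk_step by (simp add: algebra_simps)
  moreover have "c u > 0" "c v > 0" using cpos u v by auto
  ultimately show ?thesis by (auto split: if_splits)
qed


lemma Bk_le_degree:
  assumes "finite V" shows "Bk E V xs u \<le> degree V E u"
  unfolding Bk_def degree_def using assms by (intro card_mono) auto

lemma sum_Bk_double:
  assumes G: "simple_graph V E" and xs: "xs \<in> permutations_of_set V"
  shows "2 * (\<Sum>u\<in>V. Bk E V xs u) = (\<Sum>u\<in>V. degree V E u)"
proof -
  have fin: "finite V" using G by (simp add: simple_graph_def)
  have d: "distinct xs" "set xs = V" using xs by (auto simp: permutations_of_set_def)
  have irr: "\<not> E w w" for w using G by (simp add: simple_graph_def)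
  have sym: "E a b \<Longrightarrow> E b a" for a b using G by (simp add: simple_graph_def)
  have injp: "inj_on (lpos xs) V" using lpos_inj d by metis
  define L where "L = Sigma V (\<lambda>u. {v\<in>V. E u v \<and> lpos xs v < lpos xs u})"
  define U where "U = Sigma V (\<lambda>u. {v\<in>V. E u v \<and> lpos xs u < lpos xs v})"
  define D where "D = Sigma V (\<lambda>u. {v\<in>V. E u v})"
  have cL: "card L = (\<Sum>u\<in>V. Bk E V xs u)" unfolding L_def Bk_def using fin by (simp add: card_SigmaI)
  have cD: "card D = (\<Sum>u\<in>V. degree V E u)" unfolding D_def degree_def using fin by (simp add: card_SigmaI)
  have finD: "finite D" unfolding D_def using fin by simp
  have DLU: "D = L \<union> U"
  proof
    show "D \<subseteq> L \<union> U"
    proof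
      fix p assume "p \<in> D"
      then obtain a b where p: "p = (a, b)" "a \<in> V" "b \<in> V" "E a b" unfolding D_def by auto
      have "a \<noteq> b" using p irr by auto
      then have "lpos xs a \<noteq> lpos xs b" using injp p by (meson inj_on_eq_iff)
      then show "p \<in> L \<union> U" using p unfolding L_def U_def by (auto simp: linorder_neq_iff)
    qed
    show "L \<union> U \<subseteq> D" unfolding L_def U_def D_def by auto
  qed
  have disj: "L \<inter> U = {}" unfolding L_def U_def by auto
  have finL: "finite L" "finite U" using finD DLU by auto
  have "U = (\<lambda>(a, b). (b, a)) ` L"
  proof
    show "U \<subseteq> (\<lambda>(a, b). (b, a)) ` L"
    proof
      fix p assume "p \<in> U"
      then obtain a b where p: "p = (a, b)" "a \<in> V" "b \<in> V" "E a b" "lpos xs a < lpos xs b" unfolding U_def by auto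
      then have "(b, a) \<in> L" unfolding L_def using sym by auto
      then show "p \<in> (\<lambda>(a, b). (b, a)) ` L" using p by force
    qed
    show "(\<lambda>(a, b). (b, a)) ` L \<subseteq> U" unfolding L_def U_def using sym by auto
  qed
  moreover have "inj_on (\<lambda>(a, b). (b, a)) L" by (auto simp: inj_on_def)
  ultimately have "card U = card L" by (simp add: card_image)
  moreover have "card D = card L + card U" using DLU disj finL by (simp add: card_Un_disjoint)
  ultimately have "card D = 2 * card L" by simp
  then show ?thesis using cL cD by simp
qed

lemma Bk_clique:
  assumes cl: "\<forall>u\<in>V. \<forall>v\<in>V. u \<noteq> v \<longrightarrow> E u v" and xs: "xs \<in> permutations_of_set V" and u: "u \<in> V"
  shows "Bk E V xs u = lpos xs u"
proof -
  have d: "distinct xs" "set xs = V" using xs by (auto simp: permutations_of_set_def)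
  have "{v \<in> V. E u v \<and> lpos xs v < lpos xs u} = {v \<in> set xs. lpos xs v < lpos xs u}"
    using cl u d by auto
  moreover have "lpos xs u \<le> length xs" using lpos_less[of u xs] u d by simp
  ultimately show ?thesis unfolding Bk_def using card_lpos_less[OF d(1)] by simp
qed

lemma const_of_cond:
  assumes G: "simple_graph V E"
    and cond: "(\<forall>u\<in>V. \<kappa> u = int (degree V E u))
    \<or> ((\<forall>u\<in>V. \<forall>v\<in>V. c u = c v) \<and> (\<forall>u\<in>V. \<kappa> u = 0))
    \<or> ((\<forall>u\<in>V. \<forall>v\<in>V. u \<noteq> v \<longrightarrow> E u v) \<and> (\<forall>u\<in>V. \<forall>v\<in>V. c u = c v)
        \<and> (\<forall>u\<in>V. \<forall>v\<in>V. \<kappa> u = \<kappa> v)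
        \<and> (\<forall>u\<in>V. 0 < \<kappa> u \<and> \<kappa> u < int (degree V E u)))"
  shows "\<forall>xs\<in>permutations_of_set V. \<forall>ys\<in>permutations_of_set V. Fc V E c \<kappa> xs = Fc V E c \<kappa> ys"
proof -
  have fin: "finite V" using G by (simp add: simple_graph_def)
  let ?P = "permutations_of_set V"
  have "\<exists>K. \<forall>xs\<in>?P. Fc V E c \<kappa> xs = K"
  proof (cases "V = {}")
    case True then show ?thesis by (simp add: Fc_def)
  next
    case False
    then obtain u0 where u0: "u0 \<in> V" by blast
    consider (i) "\<forall>u\<in>V. \<kappa> u = int (degree V E u)"
      | (ii) "(\<forall>u\<in>V. \<forall>v\<in>V. c u = c v) \<and> (\<forall>u\<in>V. \<kappa> u = 0)"
      | (iii) "(\<forall>u\<in>V. \<forall>v\<in>V. u \<noteq> v \<longrightarrow> E u v) \<and> (\<forall>u\<in>V. \<forall>v\<in>V. c u = c v)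
        \<and> (\<forall>u\<in>V. \<forall>v\<in>V. \<kappa> u = \<kappa> v)" using cond by blast
    then show ?thesis
    proof cases
      case i
      have "Fc V E c \<kappa> xs = 0" for xs
      proof -
        have "gk (\<kappa> u) (Bk E V xs u) = 0" if "u \<in> V" for u
          using i that Bk_le_degree[OF fin, of E xs u] unfolding gk_def by simp
        then show ?thesis unfolding Fc_def by simp
      qed
      then show ?thesis by blast
    next
      case ii
      have "Fc V E c \<kappa> xs = c u0 * (real (\<Sum>u\<in>V. degree V E u) / 2)" if xs: "xs \<in> ?P" for xs
      proof -
        have "Fc V E c \<kappa> xs = (\<Sum>u\<in>V. c u0 * real (Bk E V xs u))"
          unfolding Fc_def
        proof (rule sum.cong[OF refl])
          fix u assume u: "u \<in> V"
          have "c u = c u0" "\<kappa> u = 0" using ii u u0 by blast+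
          then show "c u * gk (\<kappa> u) (Bk E V xs u) = c u0 * real (Bk E V xs u)"
            by (simp add: gk_def)
        qed
        also have "\<dots> = c u0 * real (\<Sum>u\<in>V. Bk E V xs u)" by (simp add: sum_distrib_left)
        also have "\<dots> = c u0 * (real (\<Sum>u\<in>V. degree V E u) / 2)"
        proof -
          have h: "real (2 * (\<Sum>u\<in>V. Bk E V xs u)) = real (\<Sum>u\<in>V. degree V E u)"
            by (simp only: sum_Bk_double[OF G xs])
          then have "real (\<Sum>u\<in>V. Bk E V xs u) = real (\<Sum>u\<in>V. degree V E u) / 2"
            by simp
          then show ?thesis by simp
        qed
        finally show ?thesis .
      qed
      then show ?thesis by blast
    next
      case iii
      have "Fc V E c \<kappa> xs = (\<Sum>i<card V. c u0 * gk (\<kappa> u0) i)" if xs: "xs \<in> ?P" for xs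
      proof -
        have d: "distinct xs" "set xs = V" using xs by (auto simp: permutations_of_set_def)
        have "Fc V E c \<kappa> xs = (\<Sum>u\<in>set xs. c u0 * gk (\<kappa> u0) (lpos xs u))"
          unfolding Fc_def
        proof (rule sum.cong)
          show "V = set xs" using d by simp
          fix u assume u: "u \<in> set xs"
          have "c u = c u0" "\<kappa> u = \<kappa> u0" using iii u u0 d by blast+
          moreover have "Bk E V xs u = lpos xs u" using Bk_clique[OF _ xs] iii u d by blast
          ultimately show "c u * gk (\<kappa> u) (Bk E V xs u) = c u0 * gk (\<kappa> u0) (lpos xs u)" by simp
        qed
        also have "\<dots> = (\<Sum>i<length xs. c u0 * gk (\<kappa> u0) (lpos xs (xs ! i)))"
          using sum.reindex_bij_betw[OF bij_betw_nth[OF d(1) refl refl], of "\<lambda>u. c u0 * gk (\<kappa> u0) (lpos xs u)"]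
          by simp
        also have "\<dots> = (\<Sum>i<length xs. c u0 * gk (\<kappa> u0) i)"
          using d by (intro sum.cong refl) (simp add: lpos_nth)
        also have "length xs = card V" using d distinct_card by metis
        finally show ?thesis .
      qed
      then show ?thesis by blast
    qed
  qed
  then show ?thesis by auto
qed

lemma propagate:
  assumes G: "simple_graph V E" and C: "graph_connected V E"
    and step: "\<And>y z. y \<in> V \<Longrightarrow> z \<in> V \<Longrightarrow> E y z \<Longrightarrow> P y \<Longrightarrow> P z"
    and r: "r \<in> V" "P r"
  shows "\<forall>w\<in>V. P w"
proof
  fix w assume w: "w \<in> V"
  have "E\<^sup>*\<^sup>* r w" using C r w by (simp add: graph_connected_def)
  then show "P w"
  proof (induction rule: rtranclp_induct)
    case base then show ?case using r by simp
  next
    case (step y z)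
    have "y \<in> V" "z \<in> V" using G step(2) by (auto simp: simple_graph_def)
    then show ?case using assms(3) step by blast
  qed
qed

lemma half:
  assumes G: "simple_graph V E"
    and K: "\<And>u v S. u \<in> V \<Longrightarrow> v \<in> V \<Longrightarrow> E u v \<Longrightarrow> S \<subseteq> V - {u, v} \<Longrightarrow>
        (\<kappa> u \<le> int (card {w\<in>S. E u w}) \<longleftrightarrow> \<kappa> v \<le> int (card {w\<in>S. E v w}))"
    and y: "y \<in> V" and z: "z \<in> V" and e: "E y z"
    and k1: "1 \<le> \<kappa> y" and k2: "\<kappa> y \<le> int (card ({w\<in>V. E y w} - {z}))"
  shows "{w\<in>V. E y w} - {z} \<subseteq> {w\<in>V. E z w} - {y} \<and> \<kappa> z \<le> \<kappa> y"
proof -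
  let ?A = "{w\<in>V. E y w} - {z}"
  have fin: "finite V" using G by (simp add: simple_graph_def)
  have irr: "\<not> E w w" for w using G by (simp add: simple_graph_def)
  have AV: "?A \<subseteq> V - {y, z}" using irr by auto
  have finA: "finite ?A" using fin by simp
  have main: "a \<in> {w\<in>V. E z w} - {y} \<and> \<kappa> z \<le> \<kappa> y" if a: "a \<in> ?A" for a
  proof -
    obtain m where m: "\<kappa> y = int (Suc m)" 
    proof -
      have "\<exists>m. \<kappa> y = int (Suc m)" using k1 by presburger
      then show ?thesis using that by blast
    qed
    have "m \<le> card (?A - {a})" using k2 m a finA by (simp add: card_Diff_singleton)
    then obtain T' where T': "T' \<subseteq> ?A - {a}" "card T' = m" "finite T'"
      by (rule obtain_subset_with_card_n)
    define T where "T = insert a T'"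
    have aT': "a \<notin> T'" using T' by auto
    have cT: "card T = Suc m" using T' aT' by (simp add: T_def)
    have TA: "T \<subseteq> ?A" using T' a by (auto simp: T_def)
    have TV: "T \<subseteq> V - {y, z}" using TA AV by blast
    have TaV: "T - {a} \<subseteq> V - {y, z}" using TV by blast
    have Ty: "{w\<in>T. E y w} = T" using TA by auto
    have Tay: "{w\<in>T - {a}. E y w} = T'" using TA aT' by (auto simp: T_def)
    have 1: "\<kappa> z \<le> int (card {w\<in>T. E z w})" using K[OF y z e TV] Ty cT m by simp
    have 2: "\<not> \<kappa> z \<le> int (card {w\<in>T - {a}. E z w})" using K[OF y z e TaV] Tay T' m by simp
    have "E z a"
    proof (rule ccontr)
      assume "\<not> E z a"
      then have "{w\<in>T. E z w} = {w\<in>T - {a}. E z w}" by auto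
      then show False using 1 2 by simp
    qed
    moreover have "a \<in> V" "a \<noteq> y" using a AV by auto
    moreover have "card {w\<in>T. E z w} \<le> card T" using T' by (intro card_mono) (auto simp: T_def)
    ultimately show ?thesis using 1 cT m by auto
  qed
  have "?A \<noteq> {}"
  proof
    assume "?A = {}"
    then have "card ?A = 0" by (simp only: card.empty)
    then show False using k1 k2 by simp
  qed
  then obtain a where "a \<in> ?A" by blast
  then have "\<kappa> z \<le> \<kappa> y" using main by blast
  moreover have "?A \<subseteq> {w\<in>V. E z w} - {y}" using main by blast
  ultimately show ?thesis by blast
qed


lemma classify:
  assumes G: "simple_graph V E" and C: "graph_connected V E"
    and kap: "\<forall>u\<in>V. 0 \<le> \<kappa> u \<and> \<kappa> u \<le> int (degree V E u)"
    and K: "\<And>u v S. u \<in> V \<Longrightarrow> v \<in> V \<Longrightarrow> E u v \<Longrightarrow> S \<subseteq> V - {u, v} \<Longrightarrow>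
        (\<kappa> u \<le> int (card {w\<in>S. E u w}) \<longleftrightarrow> \<kappa> v \<le> int (card {w\<in>S. E v w}))
        \<and> (\<kappa> u \<le> int (card {w\<in>S. E u w}) \<longrightarrow> c u = c v)"
  shows "(\<forall>u\<in>V. \<kappa> u = int (degree V E u))
    \<or> ((\<forall>u\<in>V. \<forall>v\<in>V. c u = c v) \<and> (\<forall>u\<in>V. \<kappa> u = 0))
    \<or> ((\<forall>u\<in>V. \<forall>v\<in>V. u \<noteq> v \<longrightarrow> E u v) \<and> (\<forall>u\<in>V. \<forall>v\<in>V. c u = c v)
        \<and> (\<forall>u\<in>V. \<forall>v\<in>V. \<kappa> u = \<kappa> v)
        \<and> (\<forall>u\<in>V. 0 < \<kappa> u \<and> \<kappa> u < int (degree V E u)))"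
proof -
  have fin: "finite V" using G by (simp add: simple_graph_def)
  have irr: "\<not> E w w" for w using G by (simp add: simple_graph_def)
  have sym: "E a b \<Longrightarrow> E b a" for a b using G by (simp add: simple_graph_def)
  have inV: "E a b \<Longrightarrow> a \<in> V \<and> b \<in> V" for a b using G by (simp add: simple_graph_def)
  have K1: "\<And>u v S. u \<in> V \<Longrightarrow> v \<in> V \<Longrightarrow> E u v \<Longrightarrow> S \<subseteq> V - {u, v} \<Longrightarrow>
        (\<kappa> u \<le> int (card {w\<in>S. E u w}) \<longleftrightarrow> \<kappa> v \<le> int (card {w\<in>S. E v w}))"
    using K by blast
  have degA: "card ({w\<in>V. E y w} - {z}) = degree V E y - 1" if "E y z" for y z
  proof -
    have "z \<in> {w\<in>V. E y w}" using that inV by auto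
    then show ?thesis using fin by (simp add: degree_def card_Diff_singleton)
  qed
  have degpos: "degree V E y \<ge> 1" if "E y z" for y z
  proof -
    have "z \<in> {w\<in>V. E y w}" using that inV by auto
    then have "{w\<in>V. E y w} \<noteq> {}" by blast
    then show ?thesis using fin by (simp add: degree_def Suc_le_eq card_gt_0_iff)
  qed
  have Sfull: "{w\<in>V - {y, z}. E y w} = {w\<in>V. E y w} - {z}" if "E y z" for y z
    using irr that by auto
  show ?thesis
  proof (cases "V = {}")
    case True then show ?thesis by simp
  next
    case False
    show ?thesis
    proof (cases "\<exists>u\<in>V. \<kappa> u = 0")
      case True
      then obtain u0 where u0: "u0 \<in> V" "\<kappa> u0 = 0" by blast
      have "\<forall>w\<in>V. \<kappa> w = 0 \<and> c w = c u0"
      proof (rule propagate[OF G C, where r = u0])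
        fix y z assume yz: "y \<in> V" "z \<in> V" "E y z" and P: "\<kappa> y = 0 \<and> c y = c u0"
        have "({}::'a set) \<subseteq> V - {y, z}" by simp
        from K[OF yz this] P kap yz show "\<kappa> z = 0 \<and> c z = c u0" by auto
      qed (use u0 in auto)
      then show ?thesis by auto
    next
      case False
      then have k1: "\<forall>u\<in>V. 1 \<le> \<kappa> u" using kap by force
      show ?thesis
      proof (cases "\<forall>u\<in>V. \<kappa> u = int (degree V E u)")
        case True then show ?thesis by simp
      next
        case False
        then obtain u0 where u0: "u0 \<in> V" "\<kappa> u0 < int (degree V E u0)" using kap by force
        have all1: "\<forall>w\<in>V. \<kappa> w < int (degree V E w) \<and> c w = c u0"
        proof (rule propagate[OF G C, where r = u0])
          fix y z assume yz: "y \<in> V" "z \<in> V" "E y z" and P: "\<kappa> y < int (degree V E y) \<and> c y = c u0"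
          have S: "V - {y, z} \<subseteq> V - {y, z}" by simp
          have zy: "E z y" using sym yz by blast
          have "\<kappa> y \<le> int (card {w\<in>V - {y, z}. E y w})"
            using P degA[OF yz(3)] Sfull[OF yz(3)] degpos[OF yz(3)] by (simp add: of_nat_diff)
          then have "\<kappa> z \<le> int (card {w\<in>V - {y, z}. E z w}) \<and> c y = c z"
            using K[OF yz S] by blast
          moreover have "{w\<in>V - {y, z}. E z w} = {w\<in>V. E z w} - {y}" using Sfull[OF zy] by auto
          moreover have "card ({w\<in>V. E z w} - {y}) = degree V E z - 1" by (rule degA[OF zy])
          moreover have "degree V E z \<ge> 1"
          proof -
            have "y \<in> {w\<in>V. E z w}" using zy yz by auto
            then have "{w\<in>V. E z w} \<noteq> {}" by blast
            then show ?thesis using fin by (simp add: degree_def Suc_le_eq card_gt_0_iff)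
          qed
          ultimately show "\<kappa> z < int (degree V E z) \<and> c z = c u0" using P by auto
        qed (use u0 in auto)
        have edge: "insert y {w\<in>V. E y w} = insert z {w\<in>V. E z w} \<and> \<kappa> y = \<kappa> z"
          if yz: "y \<in> V" "z \<in> V" "E y z" for y z
        proof -
          have zy: "E z y" using sym yz by blast
          have ky: "\<kappa> y \<le> int (card ({w\<in>V. E y w} - {z}))"
            using all1 yz degA[OF yz(3)] degpos[OF yz(3)] by (force simp: of_nat_diff)
          have kz: "\<kappa> z \<le> int (card ({w\<in>V. E z w} - {y}))"
            using all1 yz degA[OF zy] degpos[OF zy] by (force simp: of_nat_diff)
          have h1: "{w\<in>V. E y w} - {z} \<subseteq> {w\<in>V. E z w} - {y} \<and> \<kappa> z \<le> \<kappa> y"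
            by (rule half[OF G K1 yz]) (use k1 yz ky in auto)
          have h2: "{w\<in>V. E z w} - {y} \<subseteq> {w\<in>V. E y w} - {z} \<and> \<kappa> y \<le> \<kappa> z"
            by (rule half[OF G K1 yz(2,1) zy]) (use k1 yz kz in auto)
          have eq: "{w\<in>V. E y w} - {z} = {w\<in>V. E z w} - {y}" using h1 h2 by blast
          have zin: "z \<in> {w\<in>V. E y w}" using yz by simp
          have yin: "y \<in> {w\<in>V. E z w}" using yz zy by simp
          have "insert y {w\<in>V. E y w} = {y, z} \<union> ({w\<in>V. E y w} - {z})" using zin by blast
          also have "\<dots> = {y, z} \<union> ({w\<in>V. E z w} - {y})" by (simp only: eq)
          also have "\<dots> = insert z {w\<in>V. E z w}" using yin by blast
          finally show ?thesis using h1 h2 by simp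
        qed
        have all2: "\<forall>w\<in>V. insert w {x\<in>V. E w x} = insert u0 {x\<in>V. E u0 x} \<and> \<kappa> w = \<kappa> u0"
        proof (rule propagate[OF G C, where r = u0])
          fix y z assume yz: "y \<in> V" "z \<in> V" "E y z"
            and P: "insert y {x\<in>V. E y x} = insert u0 {x\<in>V. E u0 x} \<and> \<kappa> y = \<kappa> u0"
          from edge[OF yz] P show "insert z {x\<in>V. E z x} = insert u0 {x\<in>V. E u0 x} \<and> \<kappa> z = \<kappa> u0"
            by simp
        qed (use u0 in simp_all)
        have clique: "\<forall>u\<in>V. \<forall>v\<in>V. u \<noteq> v \<longrightarrow> E u v"
        proof (intro ballI impI)
          fix u v assume uv: "u \<in> V" "v \<in> V" "u \<noteq> v"
          have "v \<in> insert v {x\<in>V. E v x}" by simp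
          moreover have "insert v {x\<in>V. E v x} = insert u {x\<in>V. E u x}"
            using all2 uv by simp
          ultimately have "v \<in> insert u {x\<in>V. E u x}" by simp
          then show "E u v" using uv by simp
        qed
        have "\<forall>u\<in>V. \<forall>v\<in>V. c u = c v" using all1 by simp
        moreover have "\<forall>u\<in>V. \<forall>v\<in>V. \<kappa> u = \<kappa> v" using all2 by simp
        moreover have "\<forall>u\<in>V. 0 < \<kappa> u \<and> \<kappa> u < int (degree V E u)" using all1 k1 by force
        ultimately show ?thesis using clique by blast
      qed
    qed
  qed
qed

theorem theorem3:
  fixes V :: "'a set" and E :: "'a \<Rightarrow> 'a \<Rightarrow> bool"
    and c :: "'a \<Rightarrow> real" and \<kappa> :: "'a \<Rightarrow> int"
  assumes "simple_graph V E" and "graph_connected V E"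
    and "\<forall>u\<in>V. c u > 0"
    and "\<forall>u\<in>V. 0 \<le> \<kappa> u \<and> \<kappa> u \<le> int (degree V E u)"
  shows "beta V E c \<kappa> =
      (\<Sum>u\<in>V. c u * of_int (int (degree V E u) - \<kappa> u) * of_int (int (degree V E u) - \<kappa> u + 1)
               / (2 * (real (degree V E u) + 1)))
    \<longleftrightarrow>
      (\<forall>u\<in>V. \<kappa> u = int (degree V E u))
    \<or> ((\<forall>u\<in>V. \<forall>v\<in>V. c u = c v) \<and> (\<forall>u\<in>V. \<kappa> u = 0))
    \<or> ((\<forall>u\<in>V. \<forall>v\<in>V. u \<noteq> v \<longrightarrow> E u v) \<and> (\<forall>u\<in>V. \<forall>v\<in>V. c u = c v)
        \<and> (\<forall>u\<in>V. \<forall>v\<in>V. \<kappa> u = \<kappa> v)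
        \<and> (\<forall>u\<in>V. 0 < \<kappa> u \<and> \<kappa> u < int (degree V E u)))"
  proof -
  have G: "simple_graph V E" and C: "graph_connected V E" and cpos: "\<forall>u\<in>V. c u > 0"
    and kap: "\<forall>u\<in>V. 0 \<le> \<kappa> u \<and> \<kappa> u \<le> int (degree V E u)" using assms by auto
  let ?const = "\<forall>xs\<in>permutations_of_set V. \<forall>ys\<in>permutations_of_set V. Fc V E c \<kappa> xs = Fc V E c \<kappa> ys"
  have b: "beta V E c \<kappa> =
      (\<Sum>u\<in>V. c u * of_int (int (degree V E u) - \<kappa> u) * of_int (int (degree V E u) - \<kappa> u + 1)
               / (2 * (real (degree V E u) + 1))) \<longleftrightarrow> ?const"
    by (rule beta_iff_const[OF G cpos kap])
  show ?thesis
    unfolding b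
  proof
    assume const: ?const
    show "(\<forall>u\<in>V. \<kappa> u = int (degree V E u))
    \<or> ((\<forall>u\<in>V. \<forall>v\<in>V. c u = c v) \<and> (\<forall>u\<in>V. \<kappa> u = 0))
    \<or> ((\<forall>u\<in>V. \<forall>v\<in>V. u \<noteq> v \<longrightarrow> E u v) \<and> (\<forall>u\<in>V. \<forall>v\<in>V. c u = c v)
        \<and> (\<forall>u\<in>V. \<forall>v\<in>V. \<kappa> u = \<kappa> v)
        \<and> (\<forall>u\<in>V. 0 < \<kappa> u \<and> \<kappa> u < int (degree V E u)))"
    proof (rule classify[OF G C kap])
      fix u v S assume "u \<in> V" "v \<in> V" "E u v" "S \<subseteq> V - {u, v}"
      then show "(\<kappa> u \<le> int (card {w\<in>S. E u w}) \<longleftrightarrow> \<kappa> v \<le> int (card {w\<in>S. E v w}))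
        \<and> (\<kappa> u \<le> int (card {w\<in>S. E u w}) \<longrightarrow> c u = c v)"
        by (rule swapkey[OF G _ _ _ _ cpos const])
    qed
  next
    assume cond: "(\<forall>u\<in>V. \<kappa> u = int (degree V E u))
    \<or> ((\<forall>u\<in>V. \<forall>v\<in>V. c u = c v) \<and> (\<forall>u\<in>V. \<kappa> u = 0))
    \<or> ((\<forall>u\<in>V. \<forall>v\<in>V. u \<noteq> v \<longrightarrow> E u v) \<and> (\<forall>u\<in>V. \<forall>v\<in>V. c u = c v)
        \<and> (\<forall>u\<in>V. \<forall>v\<in>V. \<kappa> u = \<kappa> v)
        \<and> (\<forall>u\<in>V. 0 < \<kappa> u \<and> \<kappa> u < int (degree V E u)))"
    show ?const by (rule const_of_cond[OF G cond])
  qed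
qed

end
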